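(* Let $m_1,m_2\ge1$, let $k_1,k_2\ge0$ be integers and $r_1,r_2>0$ with $r_1^2+r_2^2=1$. Let $F_1:\mathbb{R}^{m_1+1}\to\mathbb{R}^{n_1+1}$ and $F_2:\mathbb{R}^{m_2+1}\to\mathbb{R}^{n_2+1}$ be harmonic forms of degrees $k_1$, $k_2$ (each component a harmonic homogeneous polynomial of that degree) with $|F_1(\bar x)|^2=r_1^2|\bar x|^{2k_1}$ on $\mathbb{R}^{m_1+1}$ and $|F_2(\bar y)|^2=r_2^2|\bar y|^{2k_2}$ on $\mathbb{R}^{m_2+1}$, restricting to $\varphi_1:\mathbb{S}^{m_1}\to\mathbb{S}^{n_1}(r_1)$ and $\varphi_2:\mathbb{S}^{m_2}\to\mathbb{S}^{n_2}(r_2)$. Let $\varphi=\iota\circ(\varphi_1,\varphi_2):\mathbb{S}^{m_1}\times\mathbb{S}^{m_2}\to\mathbb{S}^{n_1+n_2+1}$, $\varphi(x,y)=(\varphi_1(x),\varphi_2(y))$, where $\mathbb{S}^{m_1}\times\mathbb{S}^{m_2}$ carries the product metric and $\iota$ is the canonical inclusion of $\mathbb{S}^{n_1}(r_1)\times\mathbb{S}^{n_2}(r_2)$ into $\mathbb{S}^{n_1+n_2+1}$. Then $\varphi$ is proper biharmonic if and only if $r_1=r_2=1/\sqrt2$ and $e(\varphi_1)\neq e(\varphi_2)$.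
   Context: $\mathbb{S}^m$ is the unit sphere in $\mathbb{R}^{m+1}$, $\mathbb{S}^n(r)$ the sphere of radius $r$ centred at $0$. Energy density $e(\psi)=\frac12|d\psi|^2$ (here constant). Proper biharmonic means vanishing bitension field $\tau_2(\varphi)=-\Delta\tau(\varphi)-\operatorname{trace}R^N(d\varphi\cdot,\tau(\varphi))d\varphi\cdot$ (with $\Delta=-\operatorname{trace}\nabla^2$) but nonvanishing tension field $\tau(\varphi)=\operatorname{trace}\nabla d\varphi$. *)

theory Defs
  imports "HOL-Analysis.Analysis"
begin

section \<open>Harmonic forms on R^(m+1) (index type 'm with CARD('m) = m+1)\<close>

definition hom_poly :: "nat \<Rightarrow> (real^'m \<Rightarrow> real) \<Rightarrow> bool" where
  "hom_poly k f \<longleftrightarrow> (\<exists>c :: ('m \<Rightarrow> nat) \<Rightarrow> real.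
     \<forall>x. f x = (\<Sum>\<alpha>\<in>{\<alpha>. sum \<alpha> UNIV = k}. c \<alpha> * (\<Prod>i\<in>UNIV. (x $ i) ^ (\<alpha> i))))"

definition eucl_laplacian :: "(real^'m \<Rightarrow> real) \<Rightarrow> real^'m \<Rightarrow> real" where
  "eucl_laplacian f x = (\<Sum>i\<in>UNIV. deriv (deriv (\<lambda>t. f (x + t *\<^sub>R axis i 1))) 0)"

definition harmonic_form :: "nat \<Rightarrow> (real^'m \<Rightarrow> real^'n) \<Rightarrow> bool" where
  "harmonic_form k F \<longleftrightarrow> (\<forall>j. hom_poly k (\<lambda>x. F x $ j) \<and>
                                (\<forall>x. eucl_laplacian (\<lambda>x. F x $ j) x = 0))"

text \<open>Geodesic of the unit sphere through x with initial velocity u (u tangent).\<close>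
definition sgeo :: "'a::real_normed_vector \<Rightarrow> 'a \<Rightarrow> real \<Rightarrow> 'a" where
  "sgeo x u t = cos (t * norm u) *\<^sub>R x + (sin (t * norm u) / norm u) *\<^sub>R u"

definition sproj :: "'a::real_inner \<Rightarrow> 'a \<Rightarrow> 'a" where
  "sproj x u = u - (u \<bullet> x) *\<^sub>R x"

text \<open>Product metric on S^m1 x S^m2: geodesics and tangent projection.\<close>
definition pgeo :: "('a::real_normed_vector \<times> 'b::real_normed_vector) \<Rightarrow> ('a \<times> 'b) \<Rightarrow> real \<Rightarrow> 'a \<times> 'b" where
  "pgeo p w t = (sgeo (fst p) (fst w) t, sgeo (snd p) (snd w) t)"

definition pproj :: "('a::real_inner \<times> 'b::real_inner) \<Rightarrow> ('a \<times> 'b) \<Rightarrow> 'a \<times> 'b" where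
  "pproj p w = (sproj (fst p) (fst w), sproj (snd p) (snd w))"

definition dmap :: "('a \<Rightarrow> 'a \<Rightarrow> real \<Rightarrow> 'a) \<Rightarrow> ('a \<Rightarrow> 'c::real_normed_vector) \<Rightarrow> 'a \<Rightarrow> 'a \<Rightarrow> 'c" where
  "dmap geo f p w = vector_derivative (\<lambda>t. f (geo p w t)) (at 0)"

text \<open>(\<nabla> d f)(w,w) = second derivative along the geodesic with velocity w.\<close>
definition ddmap :: "('a \<Rightarrow> 'a \<Rightarrow> real \<Rightarrow> 'a) \<Rightarrow> ('a \<Rightarrow> 'c::real_normed_vector) \<Rightarrow> 'a \<Rightarrow> 'a \<Rightarrow> 'c" where
  "ddmap geo f p w =
     vector_derivative (\<lambda>t. vector_derivative (\<lambda>s. f (geo p w s)) (at t)) (at 0)"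

text \<open>Energy density e(f) = |df|^2/2; the trace over T_pM is computed as the sum over the
  ambient orthonormal basis of the tangential projections (= trace over an orthonormal
  basis of T_pM).\<close>
definition energy_density ::
  "('a::euclidean_space \<Rightarrow> 'a \<Rightarrow> real \<Rightarrow> 'a) \<Rightarrow> ('a \<Rightarrow> 'a \<Rightarrow> 'a) \<Rightarrow> ('a \<Rightarrow> 'c::real_normed_vector) \<Rightarrow> 'a \<Rightarrow> real" where
  "energy_density geo proj f p = (\<Sum>b\<in>Basis. (norm (dmap geo f p (proj p b)))\<^sup>2) / 2"

definition ttan :: "'c::real_inner \<Rightarrow> 'c \<Rightarrow> 'c" where
  "ttan q v = v - (v \<bullet> q) *\<^sub>R q"

definition tension ::
  "('a::euclidean_space \<Rightarrow> 'a \<Rightarrow> real \<Rightarrow> 'a) \<Rightarrow> ('a \<Rightarrow> 'a \<Rightarrow> 'a) \<Rightarrow> ('a \<Rightarrow> 'c::real_inner) \<Rightarrow> 'a \<Rightarrow> 'c" where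
  "tension geo proj f p = ttan (f p) (\<Sum>b\<in>Basis. ddmap geo f p (proj p b))"

text \<open>Second covariant derivative (\<nabla>^2 V)(w,w) of a section V of f^{-1}TS, computed along the
  geodesic with velocity w (pull-back connection = tangential part of the derivative).\<close>
definition cov2 ::
  "('a \<Rightarrow> 'a \<Rightarrow> real \<Rightarrow> 'a) \<Rightarrow> ('a \<Rightarrow> 'c::real_inner) \<Rightarrow> ('a \<Rightarrow> 'c) \<Rightarrow> 'a \<Rightarrow> 'a \<Rightarrow> 'c" where
  "cov2 geo f V p w = ttan (f p) (vector_derivative
      (\<lambda>t. ttan (f (geo p w t)) (vector_derivative (\<lambda>s. V (geo p w s)) (at t))) (at 0))"

definition rough_laplacian ::
  "('a::euclidean_space \<Rightarrow> 'a \<Rightarrow> real \<Rightarrow> 'a) \<Rightarrow> ('a \<Rightarrow> 'a \<Rightarrow> 'a) \<Rightarrow> ('a \<Rightarrow> 'c::real_inner) \<Rightarrow> ('a \<Rightarrow> 'c) \<Rightarrow> 'a \<Rightarrow> 'c" where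
  "rough_laplacian geo proj f V p = - (\<Sum>b\<in>Basis. cov2 geo f V p (proj p b))"

text \<open>Curvature tensor of the unit sphere, R(X,Y)Z = <Y,Z>X - <X,Z>Y
  (convention R(X,Y) = [\<nabla>_X,\<nabla>_Y] - \<nabla>_[X,Y]).\<close>
definition sphere_curv :: "'c::real_inner \<Rightarrow> 'c \<Rightarrow> 'c \<Rightarrow> 'c" where
  "sphere_curv X Y Z = (Y \<bullet> Z) *\<^sub>R X - (X \<bullet> Z) *\<^sub>R Y"

definition bitension ::
  "('a::euclidean_space \<Rightarrow> 'a \<Rightarrow> real \<Rightarrow> 'a) \<Rightarrow> ('a \<Rightarrow> 'a \<Rightarrow> 'a) \<Rightarrow> ('a \<Rightarrow> 'c::real_inner) \<Rightarrow> 'a \<Rightarrow> 'c" where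
  "bitension geo proj f p =
     - rough_laplacian geo proj f (tension geo proj f) p
     - (\<Sum>b\<in>Basis. sphere_curv (dmap geo f p (proj p b)) (tension geo proj f p)
                                 (dmap geo f p (proj p b)))"

definition proper_biharmonic ::
  "('a::euclidean_space \<Rightarrow> 'a \<Rightarrow> real \<Rightarrow> 'a) \<Rightarrow> ('a \<Rightarrow> 'a \<Rightarrow> 'a) \<Rightarrow> 'a set \<Rightarrow> ('a \<Rightarrow> 'c::real_inner) \<Rightarrow> bool" where
  "proper_biharmonic geo proj M f \<longleftrightarrow>
     (\<forall>p\<in>M. bitension geo proj f p = 0) \<and> (\<exists>p\<in>M. tension geo proj f p \<noteq> 0)"

end

theory Submission
  imports Defs
begin

definition c2 :: "('a::euclidean_space \<Rightarrow> real) \<Rightarrow> ('a \<Rightarrow> 'a \<Rightarrow> real) \<Rightarrow> ('a \<Rightarrow> 'a \<Rightarrow> 'a \<Rightarrow> real) \<Rightarrow> bool" where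
  "c2 f D1 D2 \<longleftrightarrow> (\<forall>x. (f has_derivative D1 x) (at x)) \<and> (\<forall>x h. ((\<lambda>y. D1 y h) has_derivative D2 x h) (at x))"

definition C2 :: "('a::euclidean_space \<Rightarrow> real) \<Rightarrow> bool" where
  "C2 f \<longleftrightarrow> (\<exists>D1 D2. c2 f D1 D2)"

lemma C2_const: "C2 (\<lambda>x. c)"
  unfolding C2_def c2_def
  by (rule exI[of _ "\<lambda>x h. 0"], rule exI[of _ "\<lambda>x h k. 0"]) (auto intro!: derivative_eq_intros)

lemma C2_nth: "C2 (\<lambda>x::real^'m. x $ i)"
  unfolding C2_def c2_def
  by (rule exI[of _ "\<lambda>x h. h $ i"], rule exI[of _ "\<lambda>x h k. 0"])
     (auto intro!: derivative_eq_intros bounded_linear_imp_has_derivative)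

lemma C2_add: "C2 f \<Longrightarrow> C2 g \<Longrightarrow> C2 (\<lambda>x. f x + g x)"
proof -
  assume "C2 f" "C2 g"
  then obtain D1 D2 E1 E2 where "c2 f D1 D2" "c2 g E1 E2" unfolding C2_def by blast
  then have "c2 (\<lambda>x. f x + g x) (\<lambda>x h. D1 x h + E1 x h) (\<lambda>x h k. D2 x h k + E2 x h k)"
    unfolding c2_def by (auto intro!: derivative_eq_intros)
  then show ?thesis unfolding C2_def by blast
qed

lemma C2_mult: "C2 f \<Longrightarrow> C2 g \<Longrightarrow> C2 (\<lambda>x. f x * g x)"
proof -
  assume "C2 f" "C2 g"
  then obtain D1 D2 E1 E2 where "c2 f D1 D2" "c2 g E1 E2" unfolding C2_def by blast
  then have "c2 (\<lambda>x. f x * g x) (\<lambda>x h. f x * E1 x h + D1 x h * g x)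
     (\<lambda>x h k. D1 x k * E1 x h + f x * E2 x h k + (D2 x h k * g x + D1 x h * E1 x k))"
    unfolding c2_def by (auto intro!: derivative_eq_intros)
  then show ?thesis unfolding C2_def by blast
qed

lemma C2_sum: "finite A \<Longrightarrow> (\<And>a. a \<in> A \<Longrightarrow> C2 (f a)) \<Longrightarrow> C2 (\<lambda>x. \<Sum>a\<in>A. f a x)"
  by (induction A rule: finite_induct) (auto intro: C2_const C2_add)

lemma C2_prod: "finite A \<Longrightarrow> (\<And>a. a \<in> A \<Longrightarrow> C2 (f a)) \<Longrightarrow> C2 (\<lambda>x. \<Prod>a\<in>A. f a x)"
  by (induction A rule: finite_induct) (auto intro: C2_const C2_mult)

lemma C2_pow: "C2 f \<Longrightarrow> C2 (\<lambda>x. f x ^ n)"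
  by (induction n) (auto intro: C2_const C2_mult)

lemma hom_poly_C2:
  assumes "hom_poly k (f :: real^'m \<Rightarrow> real)"
  shows "C2 f"
proof -
  obtain c where c: "\<forall>x. f x = (\<Sum>\<alpha>\<in>{\<alpha>. sum \<alpha> UNIV = k}. c \<alpha> * (\<Prod>i\<in>UNIV. (x $ i) ^ (\<alpha> i)))"
    using assms unfolding hom_poly_def by blast
  have e: "f = (\<lambda>x. \<Sum>\<alpha>\<in>{\<alpha>. sum \<alpha> UNIV = k}. c \<alpha> * (\<Prod>i\<in>UNIV. (x $ i) ^ (\<alpha> i)))"
    using c by auto
  show ?thesis
  proof (cases "finite {\<alpha>::'m\<Rightarrow>nat. sum \<alpha> UNIV = k}")
    case True
    show ?thesis unfolding e
      by (intro C2_sum True C2_mult C2_const C2_prod C2_pow C2_nth) auto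
  next
    case False
    show ?thesis unfolding e using False by (simp add: C2_const)
  qed
qed

lemma hom_poly_homog:
  assumes "hom_poly k (f :: real^'m \<Rightarrow> real)"
  shows "f (s *\<^sub>R x) = s ^ k * f x"
proof -
  obtain c where c: "\<forall>x. f x = (\<Sum>\<alpha>\<in>{\<alpha>. sum \<alpha> UNIV = k}. c \<alpha> * (\<Prod>i\<in>UNIV. (x $ i) ^ (\<alpha> i)))"
    using assms unfolding hom_poly_def by blast
  have "(\<Prod>i\<in>UNIV. ((s *\<^sub>R x) $ i) ^ (\<alpha> i)) = s ^ k * (\<Prod>i\<in>UNIV. (x $ i) ^ (\<alpha> i))"
    if "sum \<alpha> UNIV = k" for \<alpha> :: "'m \<Rightarrow> nat"
  proof -
    have "(\<Prod>i\<in>UNIV. s ^ \<alpha> i) = s ^ (sum \<alpha> UNIV)" by (simp add: power_sum)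
    then have "(\<Prod>i\<in>UNIV. s ^ \<alpha> i) = s ^ k" using that by simp
    then show ?thesis by (simp add: power_mult_distrib prod.distrib)
  qed
  then show ?thesis using c
    by (simp add: sum_distrib_left algebra_simps)
qed

lemma c2_lin1: "c2 f D1 D2 \<Longrightarrow> linear (D1 x)"
  unfolding c2_def using has_derivative_linear by blast

lemma c2_lin2: "c2 f D1 D2 \<Longrightarrow> linear (D2 x h)"
  unfolding c2_def using has_derivative_linear by blast

lemma lin_rep: "linear L \<Longrightarrow> L h = (\<Sum>b\<in>Basis. (h \<bullet> b) * L b)"
proof -
  assume L: "linear L"
  have "L h = L (\<Sum>b\<in>Basis. (h \<bullet> b) *\<^sub>R b)" by (simp add: euclidean_representation)
  also have "\<dots> = (\<Sum>b\<in>Basis. (h \<bullet> b) * L b)"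
    using L by (simp add: linear_sum linear_scale)
  finally show ?thesis .
qed

lemma c2_D2_rep:
  assumes "c2 f D1 D2"
  shows "D2 x h k = (\<Sum>b\<in>Basis. (h \<bullet> b) * D2 x b k)"
proof -
  have e: "(\<lambda>y. D1 y h) = (\<lambda>y. \<Sum>b\<in>Basis. (h \<bullet> b) * D1 y b)"
    by (rule ext, rule lin_rep[OF c2_lin1[OF assms]])
  have d1: "((\<lambda>y. D1 y h) has_derivative D2 x h) (at x)" using assms unfolding c2_def by blast
  have d2: "((\<lambda>y. \<Sum>b\<in>Basis. (h \<bullet> b) * D1 y b) has_derivative (\<lambda>k. \<Sum>b\<in>Basis. (h \<bullet> b) * D2 x b k)) (at x)"
    using assms unfolding c2_def by (intro has_derivative_sum has_derivative_mult_right) auto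
  have "D2 x h = (\<lambda>k. \<Sum>b\<in>Basis. (h \<bullet> b) * D2 x b k)"
    using has_derivative_unique[OF d1 d2[folded e]] .
  then show ?thesis by metis
qed

lemma c2_lin2': "c2 f D1 D2 \<Longrightarrow> linear (\<lambda>h. D2 x h k)"
proof -
  assume f: "c2 f D1 D2"
  have e: "(\<lambda>h. D2 x h k) = (\<lambda>h. \<Sum>b\<in>Basis. (h \<bullet> b) * D2 x b k)"
    by (rule ext, rule c2_D2_rep[OF f])
  have "linear (\<lambda>h. \<Sum>b\<in>Basis. (h \<bullet> b) * D2 x b k)"
    by (rule linearI) (auto simp: inner_add_left distrib_right sum.distrib sum_distrib_left mult.assoc)
  then show ?thesis unfolding e .
qed

lemma chain_curve:
  assumes "\<And>x. (g has_derivative G x) (at x)"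
    and "(\<gamma> has_vector_derivative v) (at t)"
  shows "((\<lambda>t. g (\<gamma> t)) has_real_derivative G (\<gamma> t) v) (at t)"
proof -
  have lin: "linear (G x)" for x using assms(1) has_derivative_linear by blast
  have "((\<lambda>t. g (\<gamma> t)) has_derivative (\<lambda>s. G (\<gamma> t) (s *\<^sub>R v))) (at t)"
    using has_derivative_compose[OF assms(2)[unfolded has_vector_derivative_def] assms(1)] .
  moreover have "(\<lambda>s. G (\<gamma> t) (s *\<^sub>R v)) = (*) (G (\<gamma> t) v)"
    using lin by (auto simp: linear_scale)
  ultimately show ?thesis unfolding has_field_derivative_def by simp
qed

lemma c2_curve:
  assumes f: "c2 f D1 D2"
    and g1: "\<And>t. (\<gamma> has_vector_derivative \<gamma>1 t) (at t)"
    and g2: "\<And>t. (\<gamma>1 has_vector_derivative \<gamma>2 t) (at t)"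
  shows "((\<lambda>t. f (\<gamma> t)) has_real_derivative D1 (\<gamma> t) (\<gamma>1 t)) (at t)"
    and "((\<lambda>t. D1 (\<gamma> t) (\<gamma>1 t)) has_real_derivative
          D1 (\<gamma> t) (\<gamma>2 t) + D2 (\<gamma> t) (\<gamma>1 t) (\<gamma>1 t)) (at t)"
proof -
  show "((\<lambda>t. f (\<gamma> t)) has_real_derivative D1 (\<gamma> t) (\<gamma>1 t)) (at t)"
    using chain_curve[of f D1 \<gamma> "\<gamma>1 t" t] f g1 unfolding c2_def by blast
  have e: "(\<lambda>t. D1 (\<gamma> t) (\<gamma>1 t)) = (\<lambda>t. \<Sum>b\<in>Basis. (\<gamma>1 t \<bullet> b) * D1 (\<gamma> t) b)"
    by (rule ext, rule lin_rep[OF c2_lin1[OF f]])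
  have db: "((\<lambda>t. D1 (\<gamma> t) b) has_real_derivative D2 (\<gamma> t) b (\<gamma>1 t)) (at t)" for b
    using chain_curve[of "\<lambda>y. D1 y b" "\<lambda>x. D2 x b" \<gamma> "\<gamma>1 t" t] f g1 unfolding c2_def by blast
  have di: "((\<lambda>t. \<gamma>1 t \<bullet> b) has_real_derivative \<gamma>2 t \<bullet> b) (at t)" for b
    using g2[of t] unfolding has_vector_derivative_def has_field_derivative_def
    by (auto intro!: derivative_eq_intros simp: algebra_simps)
  have "((\<lambda>t. \<Sum>b\<in>Basis. (\<gamma>1 t \<bullet> b) * D1 (\<gamma> t) b) has_real_derivative
      (\<Sum>b\<in>Basis. (\<gamma>1 t \<bullet> b) * D2 (\<gamma> t) b (\<gamma>1 t) + (\<gamma>2 t \<bullet> b) * D1 (\<gamma> t) b)) (at t)"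
    by (rule DERIV_sum[where f="\<lambda>t b. (\<gamma>1 t \<bullet> b) * D1 (\<gamma> t) b"
          and f'="\<lambda>b. (\<gamma>1 t \<bullet> b) * D2 (\<gamma> t) b (\<gamma>1 t) + (\<gamma>2 t \<bullet> b) * D1 (\<gamma> t) b"],
        rule DERIV_mult'[OF di db])
  moreover have "(\<Sum>b\<in>Basis. (\<gamma>1 t \<bullet> b) * D2 (\<gamma> t) b (\<gamma>1 t) + (\<gamma>2 t \<bullet> b) * D1 (\<gamma> t) b)
     = D1 (\<gamma> t) (\<gamma>2 t) + D2 (\<gamma> t) (\<gamma>1 t) (\<gamma>1 t)"
    using lin_rep[OF c2_lin1[OF f], of "\<gamma> t" "\<gamma>2 t"] c2_D2_rep[OF f, of "\<gamma> t" "\<gamma>1 t" "\<gamma>1 t"]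
    by (simp add: sum.distrib)
  ultimately show "((\<lambda>t. D1 (\<gamma> t) (\<gamma>1 t)) has_real_derivative
          D1 (\<gamma> t) (\<gamma>2 t) + D2 (\<gamma> t) (\<gamma>1 t) (\<gamma>1 t)) (at t)"
    unfolding e by simp
qed

lemma Basis_vec_real: "(Basis :: (real^'m) set) = range (\<lambda>i. axis i 1)"
  by (auto simp: Basis_vec_def)

lemma sum_Basis_vec: "(\<Sum>b\<in>(Basis :: (real^'m) set). g b) = (\<Sum>i\<in>UNIV. g (axis i 1))"
  unfolding Basis_vec_real by (subst sum.reindex) (auto intro!: inj_onI simp: axis_eq_axis)

lemma euler:
  assumes f: "c2 f D1 D2" and h: "hom_poly k (f :: real^'m \<Rightarrow> real)"
  shows "D1 x x = real k * f x" and "D2 x x x = real k * real (k - 1) * f x"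
proof -
  let ?g = "\<lambda>s::real. s *\<^sub>R x"
  have g1: "\<And>t. (?g has_vector_derivative x) (at t)"
    by (auto intro!: derivative_eq_intros)
  have g2: "\<And>t. ((\<lambda>s. x) has_vector_derivative 0) (at t)"
    by (auto intro!: derivative_eq_intros)
  note cc = c2_curve[OF f, of ?g "\<lambda>t. x" "\<lambda>t. 0", OF g1 g2]
  have hs: "(\<lambda>s. f (s *\<^sub>R x)) = (\<lambda>s. s ^ k * f x)" using hom_poly_homog[OF h] by auto
  have d1: "D1 (s *\<^sub>R x) x = real k * s ^ (k - 1) * f x" for s
  proof -
    have "((\<lambda>s. s ^ k * f x) has_real_derivative real k * s ^ (k - 1) * f x) (at s)"
      by (auto intro!: derivative_eq_intros)
    moreover have "((\<lambda>s. s ^ k * f x) has_real_derivative D1 (s *\<^sub>R x) x) (at s)"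
      using cc(1)[of s] unfolding hs .
    ultimately show ?thesis using DERIV_unique by metis
  qed
  show "D1 x x = real k * f x" using d1[of 1] by simp
  have l0: "D1 y 0 = 0" for y using c2_lin1[OF f] linear_0 by blast
  have "((\<lambda>s. real k * s ^ (k - 1) * f x) has_real_derivative real k * (real (k - 1) * s ^ (k - 1 - 1)) * f x) (at s)" for s
    by (auto intro!: derivative_eq_intros)
  moreover have "(\<lambda>s. D1 (s *\<^sub>R x) x) = (\<lambda>s. real k * s ^ (k - 1) * f x)" using d1 by auto
  moreover have "((\<lambda>s. D1 (s *\<^sub>R x) x) has_real_derivative D2 x x x) (at 1)"
    using cc(2)[of 1] l0 by simp
  ultimately have "D2 x x x = real k * (real (k - 1) * 1 ^ (k - 1 - 1)) * f x"
    using DERIV_unique by metis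
  then show "D2 x x x = real k * real (k - 1) * f x" by simp
qed

lemma laplace_D2:
  assumes f: "c2 f D1 D2"
  shows "eucl_laplacian f x = (\<Sum>b\<in>Basis. D2 x b b)"
proof -
  have l0: "D1 y 0 = 0" for y using c2_lin1[OF f] linear_0 by blast
  have "deriv (deriv (\<lambda>t. f (x + t *\<^sub>R e))) 0 = D2 x e e" for e
  proof -
    let ?g = "\<lambda>t::real. x + t *\<^sub>R e"
    have g1: "\<And>t. (?g has_vector_derivative e) (at t)"
      by (auto intro!: derivative_eq_intros)
    have g2: "\<And>t. ((\<lambda>s. e) has_vector_derivative 0) (at t)"
      by (auto intro!: derivative_eq_intros)
    note cc = c2_curve[OF f, of ?g "\<lambda>t. e" "\<lambda>t. 0", OF g1 g2]
    have "deriv (\<lambda>t. f (x + t *\<^sub>R e)) = (\<lambda>t. D1 (x + t *\<^sub>R e) e)"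
      using cc(1) by (intro ext DERIV_imp_deriv)
    then show ?thesis using cc(2)[of 0] l0 DERIV_imp_deriv by simp
  qed
  then show ?thesis unfolding eucl_laplacian_def sum_Basis_vec by simp
qed

definition lam :: "nat \<Rightarrow> nat \<Rightarrow> real" where
  "lam k n = real k * (real k + real n - 2)"

lemma sproj_norm2:
  fixes x b :: "'a::euclidean_space"
  assumes "x \<bullet> x = 1" "b \<in> Basis"
  shows "(norm (sproj x b))\<^sup>2 = 1 - (b \<bullet> x)\<^sup>2"
  using assms unfolding sproj_def power2_norm_eq_inner
  by (simp add: inner_diff_left inner_diff_right power2_eq_square inner_commute algebra_simps)

lemma sum_sproj_norm2:
  fixes x :: "'a::euclidean_space"
  assumes "x \<bullet> x = 1"
  shows "(\<Sum>b\<in>Basis. (norm (sproj x b))\<^sup>2) = real DIM('a) - 1"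
proof -
  have "(\<Sum>b\<in>Basis. (norm (sproj x b))\<^sup>2) = (\<Sum>b\<in>Basis. 1 - (b \<bullet> x)\<^sup>2)"
    using sproj_norm2[OF assms] by simp
  also have "\<dots> = real DIM('a) - (\<Sum>b\<in>Basis. (x \<bullet> b) * (x \<bullet> b))"
    by (simp add: sum_subtractf power2_eq_square inner_commute)
  also have "(\<Sum>b\<in>Basis. (x \<bullet> b) * (x \<bullet> b)) = 1"
    using euclidean_inner[of x x] assms by simp
  finally show ?thesis .
qed

lemma trace_D2:
  fixes x :: "'a::euclidean_space"
  assumes f: "c2 f D1 D2" and x: "x \<bullet> x = 1"
  shows "(\<Sum>b\<in>Basis. D2 x (sproj x b) (sproj x b)) = (\<Sum>b\<in>Basis. D2 x b b) - D2 x x x"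
proof -
  have L1: "linear (\<lambda>h. D2 x h k)" for k by (rule c2_lin2'[OF f])
  have L2: "linear (D2 x h)" for h by (rule c2_lin2[OF f])
  have e: "D2 x (sproj x b) (sproj x b) = D2 x b b - (b \<bullet> x) * D2 x b x - (b \<bullet> x) * D2 x x b
       + (b \<bullet> x) * (b \<bullet> x) * D2 x x x" for b
  proof -
    have a: "D2 x (b - c *\<^sub>R x) k = D2 x b k - c * D2 x x k" for c k
      using linear_diff[OF L1[of k]] linear_scale[OF L1[of k]] by simp
    have b': "D2 x h (b - c *\<^sub>R x) = D2 x h b - c * D2 x h x" for c h
      using linear_diff[OF L2[of h]] linear_scale[OF L2[of h]] by simp
    show ?thesis unfolding sproj_def a b' by (simp add: algebra_simps)
  qed
  have s1: "(\<Sum>b\<in>Basis. (b \<bullet> x) * D2 x b x) = D2 x x x"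
    using lin_rep[OF L1[of x], of x] by (simp add: inner_commute)
  have s2: "(\<Sum>b\<in>Basis. (b \<bullet> x) * D2 x x b) = D2 x x x"
    using lin_rep[OF L2[of x], of x] by (simp add: inner_commute)
  have s3: "(\<Sum>b\<in>Basis. (b \<bullet> x) * (b \<bullet> x) * D2 x x x) = D2 x x x"
    using euclidean_inner[of x x] x by (simp add: sum_distrib_right[symmetric] inner_commute)
  show ?thesis unfolding e
    by (simp add: sum.distrib sum_subtractf s1 s2 s3)
qed

lemma scalar_trace:
  fixes x :: "real^'m"
  assumes f: "c2 f D1 D2" and h: "hom_poly k f" and lap: "\<forall>x. eucl_laplacian f x = 0"
    and x: "x \<bullet> x = 1"
  shows "(\<Sum>b\<in>Basis. D2 x (sproj x b) (sproj x b) - (norm (sproj x b))\<^sup>2 * D1 x x)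
       = - lam k CARD('m) * f x"
proof -
  have "(\<Sum>b\<in>Basis. D2 x b b) = 0" using lap laplace_D2[OF f, of x] by simp
  then have t: "(\<Sum>b\<in>Basis. D2 x (sproj x b) (sproj x b)) = - (real k * real (k - 1) * f x)"
    using trace_D2[OF f x] euler(2)[OF f h] by simp
  have "(\<Sum>b\<in>Basis. (norm (sproj x b))\<^sup>2 * D1 x x) = (real CARD('m) - 1) * (real k * f x)"
    using sum_sproj_norm2[OF x] euler(1)[OF f h] by (simp add: sum_distrib_right[symmetric])
  then show ?thesis using t
    by (cases k) (auto simp: sum_subtractf lam_def algebra_simps)
qed

definition sgeo1 :: "'a::real_normed_vector \<Rightarrow> 'a \<Rightarrow> real \<Rightarrow> 'a" where
  "sgeo1 x u t = (- norm u * sin (t * norm u)) *\<^sub>R x + cos (t * norm u) *\<^sub>R u"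

definition sgeo2 :: "'a::real_normed_vector \<Rightarrow> 'a \<Rightarrow> real \<Rightarrow> 'a" where
  "sgeo2 x u t = (- (norm u)\<^sup>2 * cos (t * norm u)) *\<^sub>R x - (norm u * sin (t * norm u)) *\<^sub>R u"

lemma sgeo_0 [simp]: "sgeo x u 0 = x" "sgeo1 x u 0 = u" "sgeo2 x u 0 = - ((norm u)\<^sup>2 *\<^sub>R x)"
  by (auto simp: sgeo_def sgeo1_def sgeo2_def)

lemma sgeo_deriv:
  shows "(sgeo x u has_vector_derivative sgeo1 x u t) (at t)"
    and "(sgeo1 x u has_vector_derivative sgeo2 x u t) (at t)"
proof -
  let ?a = "norm u"
  have dc: "((\<lambda>t. cos (t * ?a)) has_real_derivative (- ?a * sin (t * ?a))) (at t)"
    by (auto intro!: derivative_eq_intros)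
  have ds: "((\<lambda>t. sin (t * ?a)) has_real_derivative (?a * cos (t * ?a))) (at t)"
    by (auto intro!: derivative_eq_intros)
  have dsc: "((\<lambda>t. - ?a * sin (t * ?a)) has_real_derivative (- ?a\<^sup>2 * cos (t * ?a))) (at t)"
    using DERIV_cmult[OF ds, of "- ?a"] by (simp add: power2_eq_square mult.assoc)
  have dcs: "((\<lambda>t. cos (t * ?a)) has_real_derivative (- (?a * sin (t * ?a)))) (at t)"
    using dc by simp
  show "(sgeo x u has_vector_derivative sgeo1 x u t) (at t)"
  proof (cases "u = 0")
    case True
    then have "sgeo x u = (\<lambda>t. x)" by (auto simp: sgeo_def fun_eq_iff)
    then show ?thesis using True by (simp add: sgeo1_def)
  next
    case False
    then have n: "?a \<noteq> 0" by simp
    have d2: "((\<lambda>t. sin (t * ?a) / ?a) has_real_derivative cos (t * ?a)) (at t)"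
      using DERIV_cdivide[OF ds, of ?a] n by simp
    have "((\<lambda>t. cos (t * ?a) *\<^sub>R x + (sin (t * ?a) / ?a) *\<^sub>R u) has_vector_derivative
        (cos (t * ?a) *\<^sub>R 0 + (- ?a * sin (t * ?a)) *\<^sub>R x) + ((sin (t * ?a) / ?a) *\<^sub>R 0 + cos (t * ?a) *\<^sub>R u)) (at t)"
      by (intro has_vector_derivative_add has_vector_derivative_scaleR dc d2 has_vector_derivative_const)
    then show ?thesis unfolding sgeo_def[abs_def] sgeo1_def by simp
  qed
  have "((\<lambda>t. (- ?a * sin (t * ?a)) *\<^sub>R x + cos (t * ?a) *\<^sub>R u) has_vector_derivative
        ((- ?a * sin (t * ?a)) *\<^sub>R 0 + (- ?a\<^sup>2 * cos (t * ?a)) *\<^sub>R x) + (cos (t * ?a) *\<^sub>R 0 + (- (?a * sin (t * ?a))) *\<^sub>R u)) (at t)"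
    by (intro has_vector_derivative_add has_vector_derivative_scaleR dsc dcs has_vector_derivative_const)
  moreover have "((- ?a * sin (t * ?a)) *\<^sub>R 0 + (- ?a\<^sup>2 * cos (t * ?a)) *\<^sub>R x) + (cos (t * ?a) *\<^sub>R 0 + (- (?a * sin (t * ?a))) *\<^sub>R u)
     = sgeo2 x u t" by (simp add: sgeo2_def)
  moreover have "(\<lambda>t. (- ?a * sin (t * ?a)) *\<^sub>R x + cos (t * ?a) *\<^sub>R u) = sgeo1 x u"
    by (simp add: sgeo1_def[abs_def])
  ultimately show "(sgeo1 x u has_vector_derivative sgeo2 x u t) (at t)" by simp
qed

lemma sgeo_sphere:
  fixes x u :: "'a::real_inner"
  assumes "x \<bullet> x = 1" "x \<bullet> u = 0"
  shows "sgeo x u t \<bullet> sgeo x u t = 1"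
proof (cases "u = 0")
  case True then show ?thesis using assms by (simp add: sgeo_def)
next
  case False
  then have n: "norm u \<noteq> 0" by simp
  have uu: "u \<bullet> u = (norm u)\<^sup>2" by (simp add: power2_norm_eq_inner)
  have "sgeo x u t \<bullet> sgeo x u t = (cos (t * norm u))\<^sup>2 * (x \<bullet> x)
      + (sin (t * norm u) / norm u)\<^sup>2 * (u \<bullet> u) + 2 * cos (t * norm u) * (sin (t * norm u) / norm u) * (x \<bullet> u)"
    unfolding sgeo_def by (simp add: inner_add_left inner_add_right inner_commute power2_eq_square algebra_simps)
  also have "\<dots> = (cos (t * norm u))\<^sup>2 + (sin (t * norm u))\<^sup>2"
    using assms n uu by (simp add: power_divide)
  finally show ?thesis by simp
qed

lemma vd_inner:
  assumes "(f has_vector_derivative f') (at t)" "(g has_vector_derivative g') (at t)"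
  shows "((\<lambda>t. f t \<bullet> g t) has_real_derivative (f t \<bullet> g' + f' \<bullet> g t)) (at t)"
proof -
  have "((\<lambda>t. f t \<bullet> g t) has_derivative (\<lambda>h. f t \<bullet> (h *\<^sub>R g') + (h *\<^sub>R f') \<bullet> g t)) (at t)"
    using has_derivative_inner[OF assms[unfolded has_vector_derivative_def]] .
  moreover have "(\<lambda>h. f t \<bullet> (h *\<^sub>R g') + (h *\<^sub>R f') \<bullet> g t) = (*) (f t \<bullet> g' + f' \<bullet> g t)"
    by (auto simp: algebra_simps)
  ultimately show ?thesis unfolding has_field_derivative_def by simp
qed

lemma vec_vd:
  fixes f :: "real \<Rightarrow> real^'n"
  assumes "\<And>j. ((\<lambda>t. f t $ j) has_real_derivative f' $ j) (at t)"
  shows "(f has_vector_derivative f') (at t)"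
  unfolding has_vector_derivative_def
proof (subst has_derivative_componentwise_within, intro ballI)
  fix i :: "real^'n" assume "i \<in> Basis"
  then obtain j where i: "i = axis j 1" unfolding Basis_vec_real by auto
  have "((\<lambda>t. f t $ j) has_derivative (*) (f' $ j)) (at t)"
    using assms[of j] unfolding has_field_derivative_def .
  moreover have "(\<lambda>x. f x \<bullet> i) = (\<lambda>t. f t $ j)" "(\<lambda>x. (x *\<^sub>R f') \<bullet> i) = (*) (f' $ j)"
    unfolding i by (auto simp: inner_axis)
  ultimately show "((\<lambda>x. f x \<bullet> i) has_derivative (\<lambda>x. (x *\<^sub>R f') \<bullet> i)) (at t within UNIV)"
    by simp
qed

lemma factor:
  fixes F :: "real^'m \<Rightarrow> real^'n"
  assumes hf: "harmonic_form k F" and nc: "\<forall>x. (norm (F x))\<^sup>2 = r\<^sup>2 * (norm x) ^ (2 * k)"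
  obtains G H :: "real^'m \<Rightarrow> real^'m \<Rightarrow> real \<Rightarrow> real^'n" where
    "\<And>x u t. ((\<lambda>t. F (sgeo x u t)) has_vector_derivative G x u t) (at t)"
    "\<And>x u t. (G x u has_vector_derivative H x u t) (at t)"
    "\<And>x u t. x \<bullet> x = 1 \<Longrightarrow> x \<bullet> u = 0 \<Longrightarrow> F (sgeo x u t) \<bullet> G x u t = 0"
    "\<And>x. x \<bullet> x = 1 \<Longrightarrow> (\<Sum>b\<in>Basis. H x (sproj x b) 0) = - lam k CARD('m) *\<^sub>R F x"
    "\<And>x. x \<bullet> x = 1 \<Longrightarrow> (\<Sum>b\<in>Basis. G x (sproj x b) 0 \<bullet> G x (sproj x b) 0) = lam k CARD('m) * r\<^sup>2"
proof -
  have "\<forall>j. \<exists>D1 D2. c2 (\<lambda>x. F x $ j) D1 D2"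
    using hf hom_poly_C2 unfolding harmonic_form_def C2_def by blast
  then obtain D1 D2 where D: "\<And>j. c2 (\<lambda>x. F x $ j) (D1 j) (D2 j)" by metis
  have lap: "\<And>j. \<forall>x. eucl_laplacian (\<lambda>x. F x $ j) x = 0" and hp: "\<And>j. hom_poly k (\<lambda>x. F x $ j)"
    using hf unfolding harmonic_form_def by auto
  define G where "G x u t = (\<chi> j. D1 j (sgeo x u t) (sgeo1 x u t))" for x u t
  define H where "H x u t = (\<chi> j. D1 j (sgeo x u t) (sgeo2 x u t) + D2 j (sgeo x u t) (sgeo1 x u t) (sgeo1 x u t))" for x u t
  have dG: "((\<lambda>t. F (sgeo x u t)) has_vector_derivative G x u t) (at t)" for x u t
    unfolding G_def
    by (rule vec_vd) (simp add: c2_curve(1)[OF D, of "sgeo x u" "sgeo1 x u" "sgeo2 x u", OF sgeo_deriv])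
  have dH: "(G x u has_vector_derivative H x u t) (at t)" for x u t
    unfolding H_def G_def[abs_def]
    by (rule vec_vd) (simp add: c2_curve(2)[OF D, of "sgeo x u" "sgeo1 x u" "sgeo2 x u", OF sgeo_deriv])
  have FF: "F y \<bullet> F y = r\<^sup>2" if "y \<bullet> y = 1" for y
  proof -
    have "norm y = 1" using that by (simp add: norm_eq_sqrt_inner)
    then have "(norm (F y))\<^sup>2 = r\<^sup>2" using nc[rule_format, of y] by simp
    then show ?thesis by (simp add: power2_norm_eq_inner)
  qed
  have orth: "F (sgeo x u t) \<bullet> G x u t = 0" if x: "x \<bullet> x = 1" "x \<bullet> u = 0" for x u t
  proof -
    have d: "((\<lambda>t. F (sgeo x u t) \<bullet> F (sgeo x u t)) has_real_derivative
        F (sgeo x u t) \<bullet> G x u t + G x u t \<bullet> F (sgeo x u t)) (at t)"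
      by (rule vd_inner[OF dG dG])
    have e: "(\<lambda>t. F (sgeo x u t) \<bullet> F (sgeo x u t)) = (\<lambda>t. r\<^sup>2)"
      using FF sgeo_sphere[OF x] by blast
    have c: "((\<lambda>t. F (sgeo x u t) \<bullet> F (sgeo x u t)) has_real_derivative 0) (at t)"
      unfolding e by (rule DERIV_const)
    have "F (sgeo x u t) \<bullet> G x u t + G x u t \<bullet> F (sgeo x u t) = 0"
      by (rule DERIV_unique[OF d c])
    then show ?thesis by (simp add: inner_commute)
  qed
  have orth2: "F x \<bullet> H x u 0 + G x u 0 \<bullet> G x u 0 = 0" if x: "x \<bullet> x = 1" "x \<bullet> u = 0" for x u
  proof -
    have d: "((\<lambda>t. F (sgeo x u t) \<bullet> G x u t) has_real_derivative
        F (sgeo x u 0) \<bullet> H x u 0 + G x u 0 \<bullet> G x u 0) (at 0)"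
      by (rule vd_inner[OF dG dH])
    have e: "(\<lambda>t. F (sgeo x u t) \<bullet> G x u t) = (\<lambda>t. 0)"
      using orth[OF x] by blast
    have c: "((\<lambda>t. F (sgeo x u t) \<bullet> G x u t) has_real_derivative 0) (at 0)"
      unfolding e by (rule DERIV_const)
    show ?thesis using DERIV_unique[OF d c] by simp
  qed
  have sp: "x \<bullet> sproj x b = 0" if "x \<bullet> x = 1" for x b :: "real^'m"
    using that unfolding sproj_def by (simp add: inner_diff_right inner_commute)
  have trH: "(\<Sum>b\<in>Basis. H x (sproj x b) 0) = - lam k CARD('m) *\<^sub>R F x" if x: "x \<bullet> x = 1" for x
  proof -
    have l: "D1 j x (- ((norm u)\<^sup>2 *\<^sub>R x)) = - (norm u)\<^sup>2 * D1 j x x" for j u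
      using c2_lin1[OF D] by (simp add: linear_neg linear_scale)
    have "(\<Sum>b\<in>Basis. H x (sproj x b) 0) $ j = - lam k CARD('m) * F x $ j" for j
      using scalar_trace[OF D hp lap x, of j]
      by (simp add: H_def l algebra_simps)
    then show ?thesis by (simp add: vec_eq_iff)
  qed
  have trG: "(\<Sum>b\<in>Basis. G x (sproj x b) 0 \<bullet> G x (sproj x b) 0) = lam k CARD('m) * r\<^sup>2" if x: "x \<bullet> x = 1" for x
  proof -
    have "(\<Sum>b\<in>Basis. G x (sproj x b) 0 \<bullet> G x (sproj x b) 0) = (\<Sum>b\<in>Basis. - (F x \<bullet> H x (sproj x b) 0))"
    proof (intro sum.cong refl)
      fix b :: "real^'m"
      show "G x (sproj x b) 0 \<bullet> G x (sproj x b) 0 = - (F x \<bullet> H x (sproj x b) 0)"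
        using orth2[OF x sp[OF x], of b] by linarith
    qed
    also have "\<dots> = - (F x \<bullet> (\<Sum>b\<in>Basis. H x (sproj x b) 0))"
      by (simp add: inner_sum_right sum_negf)
    also have "\<dots> = lam k CARD('m) * r\<^sup>2" using trH[OF x] FF[OF x] by simp
    finally show ?thesis .
  qed
  show ?thesis using that dG dH orth trH trG by blast
qed

lemma sgeo_zero [simp]: "sgeo y 0 t = y"
  by (simp add: sgeo_def)

lemma sproj_zero [simp]: "sproj y 0 = 0"
  by (simp add: sproj_def)

lemma pgeo_l: "pgeo (x, y) (u, 0) t = (sgeo x u t, y)"
  and pgeo_r: "pgeo (x, y) (0, v) t = (x, sgeo y v t)"
  by (simp_all add: pgeo_def)

lemma pproj_l: "pproj (x, y) (b, 0) = (sproj x b, 0)"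
  by (simp add: pproj_def)

lemma pproj_r: "pproj (x, y) (0, c) = (0, sproj y c)"
  by (simp add: pproj_def)

lemma ttan_add: "ttan q (v + w) = ttan q v + ttan q w"
  by (simp add: ttan_def inner_add_left scaleR_add_left)

lemma ttan_sum: "ttan q (\<Sum>i\<in>S. f i) = (\<Sum>i\<in>S. ttan q (f i))"
  by (simp add: ttan_def inner_sum_left scaleR_sum_left sum_subtractf)

lemma sum_Basis_prod_gen:
  fixes f :: "('a::euclidean_space \<times> 'b::euclidean_space) \<Rightarrow> 'c::comm_monoid_add"
  shows "(\<Sum>i\<in>Basis. f i) = (\<Sum>i\<in>Basis. f (i, 0)) + (\<Sum>i\<in>Basis. f (0, i))"
proof -
  have "inj_on (\<lambda>u. (u::'a, 0::'b)) Basis" "inj_on (\<lambda>u. (0::'a, u::'b)) Basis"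
    by (auto intro!: inj_onI Pair_inject)
  thus ?thesis
    unfolding Basis_prod_def
    by (subst sum.union_disjoint) (auto simp: Basis_prod_def sum.reindex)
qed

lemma sum_pair_l: "(\<Sum>b\<in>S. (f b, 0)) = (\<Sum>b\<in>S. f b, 0)"
  and sum_pair_r: "(\<Sum>b\<in>S. (0, g b)) = (0, \<Sum>b\<in>S. g b)"
  by (simp_all add: prod_eq_iff fst_sum snd_sum)

lemma sp_orth: "x \<bullet> x = 1 \<Longrightarrow> x \<bullet> sproj x b = 0"
  unfolding sproj_def by (simp add: inner_diff_right inner_commute)

lemma left_facts:
  fixes F1 :: "'a::real_inner \<Rightarrow> 'c::real_inner" and F2 :: "'b::real_inner \<Rightarrow> 'd::real_inner"
  assumes dG: "\<And>x u t. ((\<lambda>t. F1 (sgeo x u t)) has_vector_derivative G1 x u t) (at t)"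
    and dH: "\<And>x u t. (G1 x u has_vector_derivative H1 x u t) (at t)"
    and orth: "\<And>x u t. x \<bullet> x = 1 \<Longrightarrow> x \<bullet> u = 0 \<Longrightarrow> F1 (sgeo x u t) \<bullet> G1 x u t = 0"
    and x: "x \<bullet> x = 1" and y: "y \<bullet> y = 1" and xu: "x \<bullet> u = 0"
    and V: "\<And>q. fst q \<bullet> fst q = 1 \<Longrightarrow> snd q \<bullet> snd q = 1 \<Longrightarrow> V q = (a1 *\<^sub>R F1 (fst q), a2 *\<^sub>R F2 (snd q))"
  shows "dmap pgeo (\<lambda>p. (F1 (fst p), F2 (snd p))) (x, y) (u, 0) = (G1 x u 0, 0)"
    and "ddmap pgeo (\<lambda>p. (F1 (fst p), F2 (snd p))) (x, y) (u, 0) = (H1 x u 0, 0)"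
    and "cov2 pgeo (\<lambda>p. (F1 (fst p), F2 (snd p))) V (x, y) (u, 0) = ttan (F1 x, F2 y) (a1 *\<^sub>R H1 x u 0, 0)"
proof -
  have e1: "(\<lambda>t. (\<lambda>p. (F1 (fst p), F2 (snd p))) (pgeo (x, y) (u, 0) t)) = (\<lambda>t. (F1 (sgeo x u t), F2 y))"
    by (simp add: pgeo_l)
  have d1: "((\<lambda>t. (F1 (sgeo x u t), F2 y)) has_vector_derivative (G1 x u t, 0)) (at t)" for t
    by (rule has_vector_derivative_Pair[OF dG has_vector_derivative_const])
  have vd: "vector_derivative (\<lambda>t. (\<lambda>p. (F1 (fst p), F2 (snd p))) (pgeo (x, y) (u, 0) t)) (at t) = (G1 x u t, 0)" for t
    unfolding e1 by (rule vector_derivative_at[OF d1])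
  show "dmap pgeo (\<lambda>p. (F1 (fst p), F2 (snd p))) (x, y) (u, 0) = (G1 x u 0, 0)"
    unfolding dmap_def by (rule vd)
  have e2: "(\<lambda>t. vector_derivative (\<lambda>s. (\<lambda>p. (F1 (fst p), F2 (snd p))) (pgeo (x, y) (u, 0) s)) (at t))
      = (\<lambda>t. (G1 x u t, 0))" using vd by auto
  have d2: "((\<lambda>t. (G1 x u t, 0)) has_vector_derivative (H1 x u t, 0)) (at t)" for t
    by (rule has_vector_derivative_Pair[OF dH has_vector_derivative_const])
  show "ddmap pgeo (\<lambda>p. (F1 (fst p), F2 (snd p))) (x, y) (u, 0) = (H1 x u 0, 0)"
    unfolding ddmap_def e2 by (rule vector_derivative_at[OF d2])
  have sph: "sgeo x u s \<bullet> sgeo x u s = 1" for s by (rule sgeo_sphere[OF x xu])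
  have e3: "(\<lambda>s. V (pgeo (x, y) (u, 0) s)) = (\<lambda>s. (a1 *\<^sub>R F1 (sgeo x u s), a2 *\<^sub>R F2 y))"
    using V sph y by (auto simp: pgeo_l)
  have d3: "((\<lambda>s. (a1 *\<^sub>R F1 (sgeo x u s), a2 *\<^sub>R F2 y)) has_vector_derivative (a1 *\<^sub>R G1 x u t, 0)) (at t)" for t
  proof -
    have "((\<lambda>s. a1 *\<^sub>R F1 (sgeo x u s)) has_vector_derivative (a1 *\<^sub>R G1 x u t + 0 *\<^sub>R F1 (sgeo x u t))) (at t)"
      by (rule has_vector_derivative_scaleR[OF DERIV_const dG])
    then show ?thesis using has_vector_derivative_Pair has_vector_derivative_const by fastforce
  qed
  have tt: "ttan ((\<lambda>p. (F1 (fst p), F2 (snd p))) (pgeo (x, y) (u, 0) t))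
        (vector_derivative (\<lambda>s. V (pgeo (x, y) (u, 0) s)) (at t)) = (a1 *\<^sub>R G1 x u t, 0)" for t
  proof -
    have "vector_derivative (\<lambda>s. V (pgeo (x, y) (u, 0) s)) (at t) = (a1 *\<^sub>R G1 x u t, 0)"
      unfolding e3 by (rule vector_derivative_at[OF d3])
    moreover have "(a1 *\<^sub>R G1 x u t) \<bullet> F1 (sgeo x u t) = 0"
      using orth[OF x xu, of t] by (simp add: inner_commute)
    ultimately show ?thesis by (simp add: pgeo_l ttan_def)
  qed
  have d4: "((\<lambda>t. (a1 *\<^sub>R G1 x u t, 0)) has_vector_derivative (a1 *\<^sub>R H1 x u 0, 0)) (at 0)"
  proof -
    have "((\<lambda>s. a1 *\<^sub>R G1 x u s) has_vector_derivative (a1 *\<^sub>R H1 x u 0 + 0 *\<^sub>R G1 x u 0)) (at 0)"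
      by (rule has_vector_derivative_scaleR[OF DERIV_const dH])
    then show ?thesis using has_vector_derivative_Pair has_vector_derivative_const by fastforce
  qed
  show "cov2 pgeo (\<lambda>p. (F1 (fst p), F2 (snd p))) V (x, y) (u, 0) = ttan (F1 x, F2 y) (a1 *\<^sub>R H1 x u 0, 0)"
    unfolding cov2_def tt vector_derivative_at[OF d4] by simp
qed

lemma right_facts:
  fixes F1 :: "'a::real_inner \<Rightarrow> 'c::real_inner" and F2 :: "'b::real_inner \<Rightarrow> 'd::real_inner"
  assumes dG: "\<And>x u t. ((\<lambda>t. F2 (sgeo x u t)) has_vector_derivative G2 x u t) (at t)"
    and dH: "\<And>x u t. (G2 x u has_vector_derivative H2 x u t) (at t)"
    and orth: "\<And>x u t. x \<bullet> x = 1 \<Longrightarrow> x \<bullet> u = 0 \<Longrightarrow> F2 (sgeo x u t) \<bullet> G2 x u t = 0"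
    and x: "x \<bullet> x = 1" and y: "y \<bullet> y = 1" and yv: "y \<bullet> v = 0"
    and V: "\<And>q. fst q \<bullet> fst q = 1 \<Longrightarrow> snd q \<bullet> snd q = 1 \<Longrightarrow> V q = (a1 *\<^sub>R F1 (fst q), a2 *\<^sub>R F2 (snd q))"
  shows "dmap pgeo (\<lambda>p. (F1 (fst p), F2 (snd p))) (x, y) (0, v) = (0, G2 y v 0)"
    and "ddmap pgeo (\<lambda>p. (F1 (fst p), F2 (snd p))) (x, y) (0, v) = (0, H2 y v 0)"
    and "cov2 pgeo (\<lambda>p. (F1 (fst p), F2 (snd p))) V (x, y) (0, v) = ttan (F1 x, F2 y) (0, a2 *\<^sub>R H2 y v 0)"
proof -
  have e1: "(\<lambda>t. (\<lambda>p. (F1 (fst p), F2 (snd p))) (pgeo (x, y) (0, v) t)) = (\<lambda>t. (F1 x, F2 (sgeo y v t)))"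
    by (simp add: pgeo_r)
  have d1: "((\<lambda>t. (F1 x, F2 (sgeo y v t))) has_vector_derivative (0, G2 y v t)) (at t)" for t
    by (rule has_vector_derivative_Pair[OF has_vector_derivative_const dG])
  have vd: "vector_derivative (\<lambda>t. (\<lambda>p. (F1 (fst p), F2 (snd p))) (pgeo (x, y) (0, v) t)) (at t) = (0, G2 y v t)" for t
    unfolding e1 by (rule vector_derivative_at[OF d1])
  show "dmap pgeo (\<lambda>p. (F1 (fst p), F2 (snd p))) (x, y) (0, v) = (0, G2 y v 0)"
    unfolding dmap_def by (rule vd)
  have e2: "(\<lambda>t. vector_derivative (\<lambda>s. (\<lambda>p. (F1 (fst p), F2 (snd p))) (pgeo (x, y) (0, v) s)) (at t))
      = (\<lambda>t. (0, G2 y v t))" using vd by auto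
  have d2: "((\<lambda>t. (0, G2 y v t)) has_vector_derivative (0, H2 y v t)) (at t)" for t
    by (rule has_vector_derivative_Pair[OF has_vector_derivative_const dH])
  show "ddmap pgeo (\<lambda>p. (F1 (fst p), F2 (snd p))) (x, y) (0, v) = (0, H2 y v 0)"
    unfolding ddmap_def e2 by (rule vector_derivative_at[OF d2])
  have sph: "sgeo y v s \<bullet> sgeo y v s = 1" for s by (rule sgeo_sphere[OF y yv])
  have e3: "(\<lambda>s. V (pgeo (x, y) (0, v) s)) = (\<lambda>s. (a1 *\<^sub>R F1 x, a2 *\<^sub>R F2 (sgeo y v s)))"
    using V sph x by (auto simp: pgeo_r)
  have d3: "((\<lambda>s. (a1 *\<^sub>R F1 x, a2 *\<^sub>R F2 (sgeo y v s))) has_vector_derivative (0, a2 *\<^sub>R G2 y v t)) (at t)" for t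
  proof -
    have "((\<lambda>s. a2 *\<^sub>R F2 (sgeo y v s)) has_vector_derivative (a2 *\<^sub>R G2 y v t + 0 *\<^sub>R F2 (sgeo y v t))) (at t)"
      by (rule has_vector_derivative_scaleR[OF DERIV_const dG])
    then show ?thesis using has_vector_derivative_Pair has_vector_derivative_const by fastforce
  qed
  have tt: "ttan ((\<lambda>p. (F1 (fst p), F2 (snd p))) (pgeo (x, y) (0, v) t))
        (vector_derivative (\<lambda>s. V (pgeo (x, y) (0, v) s)) (at t)) = (0, a2 *\<^sub>R G2 y v t)" for t
  proof -
    have "vector_derivative (\<lambda>s. V (pgeo (x, y) (0, v) s)) (at t) = (0, a2 *\<^sub>R G2 y v t)"
      unfolding e3 by (rule vector_derivative_at[OF d3])
    moreover have "(a2 *\<^sub>R G2 y v t) \<bullet> F2 (sgeo y v t) = 0"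
      using orth[OF y yv, of t] by (simp add: inner_commute)
    ultimately show ?thesis by (simp add: pgeo_r ttan_def)
  qed
  have d4: "((\<lambda>t. (0, a2 *\<^sub>R G2 y v t)) has_vector_derivative (0, a2 *\<^sub>R H2 y v 0)) (at 0)"
  proof -
    have "((\<lambda>s. a2 *\<^sub>R G2 y v s) has_vector_derivative (a2 *\<^sub>R H2 y v 0 + 0 *\<^sub>R G2 y v 0)) (at 0)"
      by (rule has_vector_derivative_scaleR[OF DERIV_const dH])
    then show ?thesis using has_vector_derivative_Pair has_vector_derivative_const by fastforce
  qed
  show "cov2 pgeo (\<lambda>p. (F1 (fst p), F2 (snd p))) V (x, y) (0, v) = ttan (F1 x, F2 y) (0, a2 *\<^sub>R H2 y v 0)"
    unfolding cov2_def tt vector_derivative_at[OF d4] by simp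
qed

lemma final_alg:
  fixes r1 r2 l1 l2 :: real
  assumes r1: "r1 > 0" and r2: "r2 > 0" and s: "r1\<^sup>2 + r2\<^sup>2 = 1"
  defines "e \<equiv> l1 * r1\<^sup>2 + l2 * r2\<^sup>2"
  defines "a1 \<equiv> e - l1" and "a2 \<equiv> e - l2"
  defines "sm \<equiv> a1 * l1 * r1\<^sup>2 + a2 * l2 * r2\<^sup>2"
  defines "b1 \<equiv> - (a1 * l1) + sm + e * a1" and "b2 \<equiv> - (a2 * l2) + sm + e * a2"
  shows "((b1 = 0 \<and> b2 = 0) \<and> (a1 \<noteq> 0 \<or> a2 \<noteq> 0)) \<longleftrightarrow>
         (r1 = 1 / sqrt 2 \<and> r2 = 1 / sqrt 2 \<and> l1 * r1\<^sup>2 / 2 \<noteq> l2 * r2\<^sup>2 / 2)"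
proof -
  define R1 where "R1 = r1\<^sup>2"
  define R2 where "R2 = r2\<^sup>2"
  have R2e: "R2 = 1 - R1" using s unfolding R1_def R2_def by simp
  have R1p: "R1 > 0" "R2 > 0" using r1 r2 unfolding R1_def R2_def by auto
  have ea1: "a1 = R2 * (l2 - l1)" unfolding a1_def e_def R1_def[symmetric] R2_def[symmetric] R2e
    by (simp add: algebra_simps)
  have ea2: "a2 = R1 * (l1 - l2)" unfolding a2_def e_def R1_def[symmetric] R2_def[symmetric] R2e
    by (simp add: algebra_simps)
  have eb1: "b1 = (l2 - l1)\<^sup>2 * R2 * (R2 - R1)"
    unfolding b1_def sm_def a1_def a2_def e_def R1_def[symmetric] R2_def[symmetric] R2e
    by (simp add: power2_eq_square algebra_simps)
  have eb2: "b2 = (l2 - l1)\<^sup>2 * R1 * (R1 - R2)"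
    unfolding b2_def sm_def a1_def a2_def e_def R1_def[symmetric] R2_def[symmetric] R2e
    by (simp add: power2_eq_square algebra_simps)
  have lhs: "((b1 = 0 \<and> b2 = 0) \<and> (a1 \<noteq> 0 \<or> a2 \<noteq> 0)) \<longleftrightarrow> (l1 \<noteq> l2 \<and> R1 = R2)"
    unfolding ea1 ea2 eb1 eb2 using R1p by auto
  have sq: "(1 / sqrt 2)\<^sup>2 = (1/2::real)" by (simp add: power_divide)
  have rr: "r = 1 / sqrt 2 \<longleftrightarrow> r\<^sup>2 = 1/2" if "r > 0" for r :: real
  proof
    assume "r = 1 / sqrt 2" then show "r\<^sup>2 = 1/2" using sq by simp
  next
    assume "r\<^sup>2 = 1/2"
    then have "r\<^sup>2 = (1 / sqrt 2)\<^sup>2" using sq by simp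
    then show "r = 1 / sqrt 2" using that by (simp add: power2_eq_iff_nonneg)
  qed
  have a: "(r1 = 1 / sqrt 2 \<and> r2 = 1 / sqrt 2) \<longleftrightarrow> R1 = R2"
    using rr[OF r1] rr[OF r2] R2e unfolding R1_def[symmetric] R2_def[symmetric] by auto
  have b: "R1 = R2 \<Longrightarrow> (l1 * R1 / 2 \<noteq> l2 * R2 / 2 \<longleftrightarrow> l1 \<noteq> l2)"
    using R1p by auto
  show ?thesis unfolding lhs R1_def[symmetric] R2_def[symmetric] using a b by blast
qed

theorem mainTheorem12:
  fixes F1 :: "real^'m1 \<Rightarrow> real^'n1" and F2 :: "real^'m2 \<Rightarrow> real^'n2"
    and k1 k2 :: nat and r1 r2 :: real
  assumes "CARD('m1) \<ge> 2" and "CARD('m2) \<ge> 2"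
    and "r1 > 0" and "r2 > 0" and "r1\<^sup>2 + r2\<^sup>2 = 1"
    and "harmonic_form k1 F1" and "harmonic_form k2 F2"
    and "\<forall>x. (norm (F1 x))\<^sup>2 = r1\<^sup>2 * (norm x) ^ (2 * k1)"
    and "\<forall>y. (norm (F2 y))\<^sup>2 = r2\<^sup>2 * (norm y) ^ (2 * k2)"
  shows "proper_biharmonic pgeo pproj (sphere (0::real^'m1) 1 \<times> sphere (0::real^'m2) 1)
           (\<lambda>p. (F1 (fst p), F2 (snd p)))
         \<longleftrightarrow> (r1 = 1 / sqrt 2 \<and> r2 = 1 / sqrt 2 \<and>
              (\<forall>x\<in>sphere (0::real^'m1) 1. \<forall>y\<in>sphere (0::real^'m2) 1.
                 energy_density sgeo sproj F1 x \<noteq> energy_density sgeo sproj F2 y))"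
proof -
  obtain G1 H1 where
    dG1: "\<And>x u t. ((\<lambda>t. F1 (sgeo x u t)) has_vector_derivative G1 x u t) (at t)"
    and dH1: "\<And>x u t. (G1 x u has_vector_derivative H1 x u t) (at t)"
    and or1: "\<And>x u t. x \<bullet> x = 1 \<Longrightarrow> x \<bullet> u = 0 \<Longrightarrow> F1 (sgeo x u t) \<bullet> G1 x u t = 0"
    and trH1: "\<And>x. x \<bullet> x = 1 \<Longrightarrow> (\<Sum>b\<in>Basis. H1 x (sproj x b) 0) = - lam k1 CARD('m1) *\<^sub>R F1 x"
    and trG1: "\<And>x. x \<bullet> x = 1 \<Longrightarrow> (\<Sum>b\<in>Basis. G1 x (sproj x b) 0 \<bullet> G1 x (sproj x b) 0) = lam k1 CARD('m1) * r1\<^sup>2"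
    using factor[OF assms(6) assms(8)] by blast
  obtain G2 H2 where
    dG2: "\<And>x u t. ((\<lambda>t. F2 (sgeo x u t)) has_vector_derivative G2 x u t) (at t)"
    and dH2: "\<And>x u t. (G2 x u has_vector_derivative H2 x u t) (at t)"
    and or2: "\<And>x u t. x \<bullet> x = 1 \<Longrightarrow> x \<bullet> u = 0 \<Longrightarrow> F2 (sgeo x u t) \<bullet> G2 x u t = 0"
    and trH2: "\<And>x. x \<bullet> x = 1 \<Longrightarrow> (\<Sum>b\<in>Basis. H2 x (sproj x b) 0) = - lam k2 CARD('m2) *\<^sub>R F2 x"
    and trG2: "\<And>x. x \<bullet> x = 1 \<Longrightarrow> (\<Sum>b\<in>Basis. G2 x (sproj x b) 0 \<bullet> G2 x (sproj x b) 0) = lam k2 CARD('m2) * r2\<^sup>2"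
    using factor[OF assms(7) assms(9)] by blast
  have FF1: "F1 x \<bullet> F1 x = r1\<^sup>2" if "x \<bullet> x = 1" for x
  proof -
    have "norm x = 1" using that by (simp add: norm_eq_1)
    then have "(norm (F1 x))\<^sup>2 = r1\<^sup>2" using assms(8)[rule_format, of x] by simp
    then show ?thesis by (simp add: power2_norm_eq_inner)
  qed
  have FF2: "F2 y \<bullet> F2 y = r2\<^sup>2" if "y \<bullet> y = 1" for y
  proof -
    have "norm y = 1" using that by (simp add: norm_eq_1)
    then have "(norm (F2 y))\<^sup>2 = r2\<^sup>2" using assms(9)[rule_format, of y] by simp
    then show ?thesis by (simp add: power2_norm_eq_inner)
  qed
  define l1 where "l1 = lam k1 CARD('m1)"
  define l2 where "l2 = lam k2 CARD('m2)"
  define e where "e = l1 * r1\<^sup>2 + l2 * r2\<^sup>2"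
  define a1 where "a1 = e - l1"
  define a2 where "a2 = e - l2"
  define sm where "sm = a1 * l1 * r1\<^sup>2 + a2 * l2 * r2\<^sup>2"
  define b1 where "b1 = - (a1 * l1) + sm + e * a1"
  define b2 where "b2 = - (a2 * l2) + sm + e * a2"
  note trH1' = trH1[folded l1_def] and trH2' = trH2[folded l2_def]
  note trG1' = trG1[folded l1_def] and trG2' = trG2[folded l2_def]
  have Vt: "\<And>q. fst q \<bullet> fst q = 1 \<Longrightarrow> snd q \<bullet> snd q = 1 \<Longrightarrow>
     (\<lambda>q. (a1 *\<^sub>R F1 (fst q), a2 *\<^sub>R F2 (snd q))) q = (a1 *\<^sub>R F1 (fst q), a2 *\<^sub>R F2 (snd q))" by simp
  have tens: "tension pgeo pproj (\<lambda>p. (F1 (fst p), F2 (snd p))) (x, y) = (a1 *\<^sub>R F1 x, a2 *\<^sub>R F2 y)"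
    if x: "x \<bullet> x = 1" and y: "y \<bullet> y = 1" for x y
  proof -
    note L = left_facts[OF dG1 dH1 or1 x y sp_orth[OF x] Vt]
    note R = right_facts[OF dG2 dH2 or2 x y sp_orth[OF y] Vt]
    have L2: "ddmap pgeo (\<lambda>p. (F1 (fst p), F2 (snd p))) (x, y) (sproj x b, 0) = (H1 x (sproj x b) 0, 0)" for b
      by (rule L(2))
    have R2: "ddmap pgeo (\<lambda>p. (F1 (fst p), F2 (snd p))) (x, y) (0, sproj y b) = (0, H2 y (sproj y b) 0)" for b
      by (rule R(2))
    have "(\<Sum>b\<in>Basis. ddmap pgeo (\<lambda>p. (F1 (fst p), F2 (snd p))) (x, y) (pproj (x, y) b))
        = (- l1 *\<^sub>R F1 x, - l2 *\<^sub>R F2 y)"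
      unfolding sum_Basis_prod_gen pproj_l pproj_r L2 R2 sum_pair_l sum_pair_r trH1'[OF x] trH2'[OF y]
      by simp
    then show ?thesis
      unfolding tension_def using FF1[OF x] FF2[OF y]
      by (simp add: ttan_def a1_def a2_def e_def algebra_simps)
  qed
  have tens': "tension pgeo pproj (\<lambda>p. (F1 (fst p), F2 (snd p))) q = (a1 *\<^sub>R F1 (fst q), a2 *\<^sub>R F2 (snd q))"
    if "fst q \<bullet> fst q = 1" "snd q \<bullet> snd q = 1" for q
    using tens[OF that] by (cases q) simp
  have bit: "bitension pgeo pproj (\<lambda>p. (F1 (fst p), F2 (snd p))) (x, y) = (b1 *\<^sub>R F1 x, b2 *\<^sub>R F2 y)"
    if x: "x \<bullet> x = 1" and y: "y \<bullet> y = 1" for x y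
  proof -
    note L = left_facts[OF dG1 dH1 or1 x y sp_orth[OF x] tens']
    note R = right_facts[OF dG2 dH2 or2 x y sp_orth[OF y] tens']
    have L1: "dmap pgeo (\<lambda>p. (F1 (fst p), F2 (snd p))) (x, y) (sproj x b, 0) = (G1 x (sproj x b) 0, 0)" for b
      by (rule L(1))
    have R1: "dmap pgeo (\<lambda>p. (F1 (fst p), F2 (snd p))) (x, y) (0, sproj y b) = (0, G2 y (sproj y b) 0)" for b
      by (rule R(1))
    have L3: "cov2 pgeo (\<lambda>p. (F1 (fst p), F2 (snd p))) (tension pgeo pproj (\<lambda>p. (F1 (fst p), F2 (snd p)))) (x, y) (sproj x b, 0)
       = ttan (F1 x, F2 y) (a1 *\<^sub>R H1 x (sproj x b) 0, 0)" for b
      by (rule L(3))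
    have R3: "cov2 pgeo (\<lambda>p. (F1 (fst p), F2 (snd p))) (tension pgeo pproj (\<lambda>p. (F1 (fst p), F2 (snd p)))) (x, y) (0, sproj y b)
       = ttan (F1 x, F2 y) (0, a2 *\<^sub>R H2 y (sproj y b) 0)" for b
      by (rule R(3))
    let ?A = "(F1 x, F2 y)"
    have rl: "rough_laplacian pgeo pproj (\<lambda>p. (F1 (fst p), F2 (snd p)))
        (tension pgeo pproj (\<lambda>p. (F1 (fst p), F2 (snd p)))) (x, y)
      = - ttan ?A (- (a1 * l1) *\<^sub>R F1 x, - (a2 * l2) *\<^sub>R F2 y)"
    proof -
      have "(\<Sum>b\<in>Basis. cov2 pgeo (\<lambda>p. (F1 (fst p), F2 (snd p)))
          (tension pgeo pproj (\<lambda>p. (F1 (fst p), F2 (snd p)))) (x, y) (pproj (x, y) b))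
        = ttan ?A (\<Sum>b\<in>Basis. (a1 *\<^sub>R H1 x (sproj x b) 0, 0)) + ttan ?A (\<Sum>b\<in>Basis. (0, a2 *\<^sub>R H2 y (sproj y b) 0))"
        unfolding sum_Basis_prod_gen pproj_l pproj_r L3 R3 ttan_sum by simp
      also have "\<dots> = ttan ?A (- (a1 * l1) *\<^sub>R F1 x, - (a2 * l2) *\<^sub>R F2 y)"
        unfolding sum_pair_l sum_pair_r scaleR_sum_right[symmetric] trH1'[OF x] trH2'[OF y] ttan_add[symmetric]
        by simp
      finally show ?thesis unfolding rough_laplacian_def by simp
    qed
    have o1: "F1 x \<bullet> G1 x (sproj x b) 0 = 0" for b using or1[OF x sp_orth[OF x], of b 0] by simp
    have o2: "F2 y \<bullet> G2 y (sproj y b) 0 = 0" for b using or2[OF y sp_orth[OF y], of b 0] by simp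
    have cu: "(\<Sum>b\<in>Basis. sphere_curv (dmap pgeo (\<lambda>p. (F1 (fst p), F2 (snd p))) (x, y) (pproj (x, y) b))
          (tension pgeo pproj (\<lambda>p. (F1 (fst p), F2 (snd p))) (x, y))
          (dmap pgeo (\<lambda>p. (F1 (fst p), F2 (snd p))) (x, y) (pproj (x, y) b)))
       = - (e *\<^sub>R (a1 *\<^sub>R F1 x, a2 *\<^sub>R F2 y))"
    proof -
      have "(\<Sum>b\<in>Basis. sphere_curv (dmap pgeo (\<lambda>p. (F1 (fst p), F2 (snd p))) (x, y) (pproj (x, y) b))
          (tension pgeo pproj (\<lambda>p. (F1 (fst p), F2 (snd p))) (x, y))
          (dmap pgeo (\<lambda>p. (F1 (fst p), F2 (snd p))) (x, y) (pproj (x, y) b)))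
        = (\<Sum>b\<in>Basis. - ((G1 x (sproj x b) 0 \<bullet> G1 x (sproj x b) 0) *\<^sub>R (a1 *\<^sub>R F1 x, a2 *\<^sub>R F2 y)))
        + (\<Sum>b\<in>Basis. - ((G2 y (sproj y b) 0 \<bullet> G2 y (sproj y b) 0) *\<^sub>R (a1 *\<^sub>R F1 x, a2 *\<^sub>R F2 y)))"
        unfolding sum_Basis_prod_gen pproj_l pproj_r L1 R1 tens[OF x y]
        by (simp add: sphere_curv_def o1 o2 inner_commute)
      also have "\<dots> = - ((l1 * r1\<^sup>2) *\<^sub>R (a1 *\<^sub>R F1 x, a2 *\<^sub>R F2 y)) - ((l2 * r2\<^sup>2) *\<^sub>R (a1 *\<^sub>R F1 x, a2 *\<^sub>R F2 y))"
        unfolding sum_negf scaleR_sum_left[symmetric] trG1'[OF x] trG2'[OF y] by simp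
      also have "\<dots> = - (e *\<^sub>R (a1 *\<^sub>R F1 x, a2 *\<^sub>R F2 y))"
        unfolding e_def by (simp add: distrib_right scaleR_add_left)
      finally show ?thesis .
    qed
    have "bitension pgeo pproj (\<lambda>p. (F1 (fst p), F2 (snd p))) (x, y) =
       - (- ttan ?A (- (a1 * l1) *\<^sub>R F1 x, - (a2 * l2) *\<^sub>R F2 y)) - (- (e *\<^sub>R (a1 *\<^sub>R F1 x, a2 *\<^sub>R F2 y)))"
      by (simp only: bitension_def rl cu)
    also have "\<dots> = (b1 *\<^sub>R F1 x, b2 *\<^sub>R F2 y)"
      using FF1[OF x] FF2[OF y]
      by (simp add: ttan_def b1_def b2_def sm_def algebra_simps)
    finally show ?thesis .
  qed
  have Mi: "p \<in> sphere 0 1 \<times> sphere 0 1 \<longleftrightarrow> fst p \<bullet> fst p = 1 \<and> snd p \<bullet> snd p = 1"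
    for p :: "(real^'m1) \<times> (real^'m2)"
    by (cases p) (simp add: norm_eq_1)
  obtain x0 :: "real^'m1" where x0: "x0 \<bullet> x0 = 1"
  proof -
    have "(axis (undefined::'m1) (1::real)) \<bullet> (axis undefined 1) = 1" by (simp add: inner_axis_axis)
    then show ?thesis using that by blast
  qed
  obtain y0 :: "real^'m2" where y0: "y0 \<bullet> y0 = 1"
  proof -
    have "(axis (undefined::'m2) (1::real)) \<bullet> (axis undefined 1) = 1" by (simp add: inner_axis_axis)
    then show ?thesis using that by blast
  qed
  have m0: "(x0, y0) \<in> sphere (0::real^'m1) 1 \<times> sphere (0::real^'m2) 1"
    using x0 y0 by (simp add: norm_eq_1)
  have nz1: "F1 x \<noteq> 0" if "x \<bullet> x = 1" for x
    using FF1[OF that] assms(3) by auto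
  have nz2: "F2 y \<noteq> 0" if "y \<bullet> y = 1" for y
    using FF2[OF that] assms(4) by auto
  have en1: "energy_density sgeo sproj F1 x = l1 * r1\<^sup>2 / 2" if x: "x \<bullet> x = 1" for x
    unfolding energy_density_def dmap_def vector_derivative_at[OF dG1] power2_norm_eq_inner
    using trG1'[OF x] by simp
  have en2: "energy_density sgeo sproj F2 y = l2 * r2\<^sup>2 / 2" if y: "y \<bullet> y = 1" for y
    unfolding energy_density_def dmap_def vector_derivative_at[OF dG2] power2_norm_eq_inner
    using trG2'[OF y] by simp
  have bih: "(\<forall>p\<in>sphere (0::real^'m1) 1 \<times> sphere (0::real^'m2) 1.
      bitension pgeo pproj (\<lambda>p. (F1 (fst p), F2 (snd p))) p = 0) \<longleftrightarrow> (b1 = 0 \<and> b2 = 0)"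
  proof
    assume "\<forall>p\<in>sphere (0::real^'m1) 1 \<times> sphere (0::real^'m2) 1.
      bitension pgeo pproj (\<lambda>p. (F1 (fst p), F2 (snd p))) p = 0"
    then have "bitension pgeo pproj (\<lambda>p. (F1 (fst p), F2 (snd p))) (x0, y0) = 0"
      using m0 by blast
    then have "b1 *\<^sub>R F1 x0 = 0" "b2 *\<^sub>R F2 y0 = 0" unfolding bit[OF x0 y0] by (auto simp: zero_prod_def)
    then show "b1 = 0 \<and> b2 = 0" using nz1[OF x0] nz2[OF y0] by (auto simp: zero_prod_def)
  next
    assume "b1 = 0 \<and> b2 = 0"
    then show "\<forall>p\<in>sphere (0::real^'m1) 1 \<times> sphere (0::real^'m2) 1.
      bitension pgeo pproj (\<lambda>p. (F1 (fst p), F2 (snd p))) p = 0"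
      using bit by (auto simp: zero_prod_def norm_eq_1)
  qed
  have ten: "(\<exists>p\<in>sphere (0::real^'m1) 1 \<times> sphere (0::real^'m2) 1.
      tension pgeo pproj (\<lambda>p. (F1 (fst p), F2 (snd p))) p \<noteq> 0) \<longleftrightarrow> (a1 \<noteq> 0 \<or> a2 \<noteq> 0)"
  proof
    assume "\<exists>p\<in>sphere (0::real^'m1) 1 \<times> sphere (0::real^'m2) 1.
      tension pgeo pproj (\<lambda>p. (F1 (fst p), F2 (snd p))) p \<noteq> 0"
    then obtain x y where "x \<bullet> x = 1" "y \<bullet> y = 1"
      "tension pgeo pproj (\<lambda>p. (F1 (fst p), F2 (snd p))) (x, y) \<noteq> 0"
      by (auto simp: norm_eq_1)
    then show "a1 \<noteq> 0 \<or> a2 \<noteq> 0" using tens by (auto simp: zero_prod_def)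
  next
    assume "a1 \<noteq> 0 \<or> a2 \<noteq> 0"
    then have "tension pgeo pproj (\<lambda>p. (F1 (fst p), F2 (snd p))) (x0, y0) \<noteq> 0"
      unfolding tens[OF x0 y0] using nz1[OF x0] nz2[OF y0] by (auto simp: zero_prod_def)
    then show "\<exists>p\<in>sphere (0::real^'m1) 1 \<times> sphere (0::real^'m2) 1.
      tension pgeo pproj (\<lambda>p. (F1 (fst p), F2 (snd p))) p \<noteq> 0"
      using m0 by blast
  qed
  have rhs: "(\<forall>x\<in>sphere (0::real^'m1) 1. \<forall>y\<in>sphere (0::real^'m2) 1.
                 energy_density sgeo sproj F1 x \<noteq> energy_density sgeo sproj F2 y)
      \<longleftrightarrow> l1 * r1\<^sup>2 / 2 \<noteq> l2 * r2\<^sup>2 / 2"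
  proof
    assume A: "\<forall>x\<in>sphere (0::real^'m1) 1. \<forall>y\<in>sphere (0::real^'m2) 1.
                 energy_density sgeo sproj F1 x \<noteq> energy_density sgeo sproj F2 y"
    have "x0 \<in> sphere (0::real^'m1) 1" "y0 \<in> sphere (0::real^'m2) 1"
      using x0 y0 by (simp_all add: norm_eq_1)
    then have "energy_density sgeo sproj F1 x0 \<noteq> energy_density sgeo sproj F2 y0" using A by blast
    then show "l1 * r1\<^sup>2 / 2 \<noteq> l2 * r2\<^sup>2 / 2" using en1[OF x0] en2[OF y0] by simp
  next
    assume B: "l1 * r1\<^sup>2 / 2 \<noteq> l2 * r2\<^sup>2 / 2"
    show "\<forall>x\<in>sphere (0::real^'m1) 1. \<forall>y\<in>sphere (0::real^'m2) 1.
                 energy_density sgeo sproj F1 x \<noteq> energy_density sgeo sproj F2 y"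
    proof (intro ballI)
      fix x :: "real^'m1" and y :: "real^'m2"
      assume "x \<in> sphere 0 1" "y \<in> sphere 0 1"
      then have xx: "x \<bullet> x = 1" and yy: "y \<bullet> y = 1" by (simp_all add: norm_eq_1)
      show "energy_density sgeo sproj F1 x \<noteq> energy_density sgeo sproj F2 y"
        unfolding en1[OF xx] en2[OF yy] by (rule B)
    qed
  qed
  have FA: "((b1 = 0 \<and> b2 = 0) \<and> (a1 \<noteq> 0 \<or> a2 \<noteq> 0)) \<longleftrightarrow>
         (r1 = 1 / sqrt 2 \<and> r2 = 1 / sqrt 2 \<and> l1 * r1\<^sup>2 / 2 \<noteq> l2 * r2\<^sup>2 / 2)"
    unfolding b1_def b2_def sm_def a1_def a2_def e_def
    by (rule final_alg[OF assms(3) assms(4) assms(5)])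
  show ?thesis
    unfolding proper_biharmonic_def bih ten rhs FA[symmetric] ..
qed

end
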